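(* (i) $\mathcal Z_{1+}=\{z=x+iy\in E^{(c)}_{d+1}:\ (x,x)-(y,y)=1,\ (x,y)=0,\ (y,y)>0,\ y^0x^d-x^0y^d>0\}$ (with $x,y\in E_{d+1}$). (ii) $\mathcal Z_{1+}=\{\Lambda\exp(itM_{0d})e_d:\ \Lambda\in G_0,\ t>0\}$. (iii) If $z\in\mathcal Z_{1+}$ then $z^0\neq0$, $z^d\neq0$, and $\mathrm{Im}(z^0/z^d)>0$.
   Context: Let $d\ge2$. $E_{d+1}=\mathbb R^{d+1}$, $E^{(c)}_{d+1}=\mathbb C^{d+1}$ with bilinear form $(x,y)=x^0y^0+x^dy^d-\sum_{j=1}^{d-1}x^jy^j$, canonical basis $e_0,\dots,e_d$. $X_d=\{x\in E_{d+1}:(x,x)=1\}$. $G_0$ is the identity component of the group of real linear maps preserving the form; $\exp$ is the matrix exponential. For $a,b\in E_{d+1}$, $\ell(a\wedge b)$ is the map $x\mapsto a(b,x)-b(a,x)$, and $M_{0d}=\ell(e_0\wedge e_d)$. $\mathcal C_1=\{\ell(a\wedge b):(a,a)=(b,b)=1,(a,b)=0,a^0b^d-a^db^0>0\}$. $\mathcal Z_{1+}=\{\exp(\tau M)c: M\in\mathcal C_1,\ c\in X_d,\ \tau\in\mathbb C,\ \mathrm{Im}\,\tau>0\}$. *)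

theory Defs
  imports "HOL-Analysis.Analysis"
begin

text \<open>Vectors of E_{d+1} (resp. its complexification) are represented as functions
  nat => real (resp. nat => complex) vanishing outside {0..d}; coordinate i is x i.
  (d+1)x(d+1) matrices are functions nat => nat => 'a vanishing outside {0..d}^2;
  they carry the product topology of the function space, which on such matrices is
  the usual topology of R^((d+1)^2).\<close>

definition vec_on :: "nat \<Rightarrow> (nat \<Rightarrow> 'a::zero) \<Rightarrow> bool" where
  "vec_on d x \<longleftrightarrow> (\<forall>i>d. x i = 0)"

definition mat_on :: "nat \<Rightarrow> (nat \<Rightarrow> nat \<Rightarrow> 'a::zero) \<Rightarrow> bool" where
  "mat_on d A \<longleftrightarrow> (\<forall>i j. d < i \<or> d < j \<longrightarrow> A i j = 0)"

definition evec :: "nat \<Rightarrow> nat \<Rightarrow> 'a::{zero,one}" where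
  "evec i = (\<lambda>j. if j = i then 1 else 0)"

definition form :: "nat \<Rightarrow> (nat \<Rightarrow> 'a::comm_ring) \<Rightarrow> (nat \<Rightarrow> 'a) \<Rightarrow> 'a" where
  "form d x y = x 0 * y 0 + x d * y d - (\<Sum>j\<in>{1..<d}. x j * y j)"

definition mat_app :: "nat \<Rightarrow> (nat \<Rightarrow> nat \<Rightarrow> 'a::comm_semiring_0) \<Rightarrow> (nat \<Rightarrow> 'a) \<Rightarrow> nat \<Rightarrow> 'a" where
  "mat_app d A x = (\<lambda>i. if i \<le> d then (\<Sum>j\<le>d. A i j * x j) else 0)"

definition mat_id :: "nat \<Rightarrow> nat \<Rightarrow> nat \<Rightarrow> 'a::{zero,one}" where
  "mat_id d = (\<lambda>i j. if i = j \<and> i \<le> d then 1 else 0)"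

definition mat_mult :: "nat \<Rightarrow> (nat \<Rightarrow> nat \<Rightarrow> 'a::comm_semiring_0) \<Rightarrow> (nat \<Rightarrow> nat \<Rightarrow> 'a) \<Rightarrow> nat \<Rightarrow> nat \<Rightarrow> 'a" where
  "mat_mult d A B = (\<lambda>i j. if i \<le> d \<and> j \<le> d then (\<Sum>k\<le>d. A i k * B k j) else 0)"

fun mat_pow :: "nat \<Rightarrow> (nat \<Rightarrow> nat \<Rightarrow> 'a::comm_semiring_1) \<Rightarrow> nat \<Rightarrow> nat \<Rightarrow> nat \<Rightarrow> 'a" where
  "mat_pow d A 0 = mat_id d"
| "mat_pow d A (Suc n) = mat_mult d A (mat_pow d A n)"

definition mat_exp :: "nat \<Rightarrow> (nat \<Rightarrow> nat \<Rightarrow> complex) \<Rightarrow> nat \<Rightarrow> nat \<Rightarrow> complex" where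
  "mat_exp d A = (\<lambda>i j. (\<Sum>n. mat_pow d A n i j / of_nat (fact n)))"

definition cmat :: "(nat \<Rightarrow> nat \<Rightarrow> real) \<Rightarrow> nat \<Rightarrow> nat \<Rightarrow> complex" where
  "cmat A = (\<lambda>i j. complex_of_real (A i j))"

definition cvec :: "(nat \<Rightarrow> real) \<Rightarrow> nat \<Rightarrow> complex" where
  "cvec x = (\<lambda>i. complex_of_real (x i))"

definition Xd :: "nat \<Rightarrow> (nat \<Rightarrow> real) set" where
  "Xd d = {x. vec_on d x \<and> form d x x = 1}"

definition Ogroup :: "nat \<Rightarrow> (nat \<Rightarrow> nat \<Rightarrow> real) set" where
  "Ogroup d = {A. mat_on d A \<and>
     (\<forall>x y. vec_on d x \<longrightarrow> vec_on d y \<longrightarrow> form d (mat_app d A x) (mat_app d A y) = form d x y)}"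

definition G0 :: "nat \<Rightarrow> (nat \<Rightarrow> nat \<Rightarrow> real) set" where
  "G0 d = connected_component_set (Ogroup d) (mat_id d)"

text \<open>matrix of l(a wedge b): x |-> a (b,x) - b (a,x)\<close>
definition wedge :: "nat \<Rightarrow> (nat \<Rightarrow> real) \<Rightarrow> (nat \<Rightarrow> real) \<Rightarrow> nat \<Rightarrow> nat \<Rightarrow> real" where
  "wedge d a b = (\<lambda>i j. if i \<le> d \<and> j \<le> d
      then a i * form d b (evec j) - b i * form d a (evec j) else 0)"

definition M0d :: "nat \<Rightarrow> nat \<Rightarrow> nat \<Rightarrow> real" where
  "M0d d = wedge d (evec 0) (evec d)"

definition C1 :: "nat \<Rightarrow> (nat \<Rightarrow> nat \<Rightarrow> real) set" where
  "C1 d = {wedge d a b | a b. vec_on d a \<and> vec_on d b \<and> form d a a = 1 \<and> form d b b = 1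
      \<and> form d a b = 0 \<and> a 0 * b d - a d * b 0 > 0}"

definition Z1plus :: "nat \<Rightarrow> (nat \<Rightarrow> complex) set" where
  "Z1plus d = {mat_app d (mat_exp d (\<lambda>i j. \<tau> * cmat M i j)) (cvec c) | M c \<tau>.
      M \<in> C1 d \<and> c \<in> Xd d \<and> Im \<tau> > 0}"

end

theory Submission
  imports Defs
begin


lemma form_sym: "form d x y = form d y x"
  unfolding form_def by (simp add: mult.commute)

lemma form_add1: "form d (\<lambda>i. f i + g i) z = form d f z + form d g z"
  unfolding form_def by (simp add: algebra_simps sum.distrib)
lemma form_diff1: "form d (\<lambda>i. f i - g i) z = form d f z - form d g z"
  unfolding form_def by (simp add: algebra_simps sum_subtractf)
lemma form_scale1: "form d (\<lambda>i. c * f i) z = c * form d f z"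
  unfolding form_def by (simp add: right_diff_distrib distrib_left sum_distrib_left mult.assoc)
lemma form_scale1': "form d (\<lambda>i. f i * c) z = form d f z * c"
  using form_scale1[of d c f z] by (simp add: mult.commute)
lemma form_scale2': "form d z (\<lambda>i. f i * c) = form d z f * c"
  using form_scale1'[of d f c z] form_sym by metis
lemma form_neg1: "form d (\<lambda>i. - f i) z = - form d f z"
  unfolding form_def by (simp add: algebra_simps sum_negf)
lemma form_div1: "form d (\<lambda>i. f i / (c::'a::field)) z = form d f z / c"
  unfolding form_def by (simp add: diff_divide_distrib add_divide_distrib sum_divide_distrib)
lemma form_add2: "form d z (\<lambda>i. f i + g i) = form d z f + form d z g"
  by (metis form_sym form_add1)
lemma form_diff2: "form d z (\<lambda>i. f i - g i) = form d z f - form d z g"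
  by (metis form_sym form_diff1)
lemma form_scale2: "form d z (\<lambda>i. c * f i) = c * form d z f"
  by (metis form_sym form_scale1)
lemma form_neg2: "form d z (\<lambda>i. - f i) = - form d z f"
  by (metis form_sym form_neg1)
lemma form_div2: "form d z (\<lambda>i. f i / (c::'a::field)) = form d z f / c"
  by (metis form_sym form_div1)

lemmas form_lin = form_add1 form_diff1 form_scale1 form_neg1 form_div1 form_scale1' form_scale2'
  form_add2 form_diff2 form_scale2 form_neg2 form_div2

lemma form_evec: "d \<ge> 1 \<Longrightarrow> form d (b::nat\<Rightarrow>'a::comm_ring_1) (evec j) =
   (if j = 0 \<or> j = d then b j else if j < d then - b j else 0)"
  unfolding form_def evec_def
  by (auto simp: if_distrib[where f="\<lambda>x. _ * x"] sum.delta cong: if_cong)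

lemma form_evec_sum: assumes "d \<ge> 1"
  shows "form d (b::nat\<Rightarrow>'a::comm_ring_1) x = (\<Sum>j\<le>d. form d b (evec j) * x j)"
proof -
  have e: "{..d} = insert 0 (insert d {1..<d})" using assms by auto
  have "(\<Sum>j\<le>d. form d b (evec j) * x j) = b 0 * x 0 + (b d * x d + (\<Sum>j\<in>{1..<d}. - b j * x j))"
  proof -
    have "(\<Sum>j\<in>insert 0 (insert d {1..<d}). form d b (evec j) * x j)
       = form d b (evec 0) * x 0 + (form d b (evec d) * x d + (\<Sum>j\<in>{1..<d}. form d b (evec j) * x j))"
      using assms by (subst sum.insert, simp, simp, subst sum.insert, auto)
    also have "(\<Sum>j\<in>{1..<d}. form d b (evec j) * x j) = (\<Sum>j\<in>{1..<d}. - b j * x j)"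
      by (rule sum.cong, auto simp: form_evec assms)
    finally show ?thesis unfolding e using assms by (simp add: form_evec)
  qed
  then show ?thesis unfolding form_def by (simp add: sum_negf)
qed

lemma form_cong: "(\<And>k. k \<le> d \<Longrightarrow> x k = y k) \<Longrightarrow> form d x z = form d y z"
  unfolding form_def by (auto intro!: sum.cong)
lemma form_cong2: "(\<And>k. k \<le> d \<Longrightarrow> x k = y k) \<Longrightarrow> form d z x = form d z y"
  unfolding form_def by (auto intro!: sum.cong)

definition Pm :: "nat \<Rightarrow> (nat \<Rightarrow> real) \<Rightarrow> (nat \<Rightarrow> real) \<Rightarrow> nat \<Rightarrow> nat \<Rightarrow> real" where
  "Pm d a b = (\<lambda>i j. if i \<le> d \<and> j \<le> d
      then a i * form d a (evec j) + b i * form d b (evec j) else 0)"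

lemma sum_lin_m: "(\<Sum>k\<in>S. ((p::'a::comm_ring) * f k - q * g k) * h k) = p * (\<Sum>k\<in>S. f k * h k) - q * (\<Sum>k\<in>S. g k * h k)"
  by (simp add: sum_subtractf sum_distrib_left left_diff_distrib mult.assoc)
lemma sum_lin_p: "(\<Sum>k\<in>S. ((p::'a::comm_ring) * f k + q * g k) * h k) = p * (\<Sum>k\<in>S. f k * h k) + q * (\<Sum>k\<in>S. g k * h k)"
  by (simp add: sum.distrib sum_distrib_left distrib_right mult.assoc)

lemma mult_wedge: assumes "d \<ge> 1"
  shows "mat_mult d (wedge d a b) B = (\<lambda>i j. if i \<le> d \<and> j \<le> d then
     a i * form d b (\<lambda>k. B k j) - b i * form d a (\<lambda>k. B k j) else 0)"
proof (intro ext)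
  fix i j
  have "(\<Sum>k\<le>d. wedge d a b i k * B k j) = (\<Sum>k\<le>d. (a i * form d b (evec k) - b i * form d a (evec k)) * B k j)"
    if "i \<le> d" by (rule sum.cong) (auto simp: wedge_def that)
  then show "mat_mult d (wedge d a b) B i j = (if i \<le> d \<and> j \<le> d then
     a i * form d b (\<lambda>k. B k j) - b i * form d a (\<lambda>k. B k j) else 0)"
    unfolding mat_mult_def sum_lin_m form_evec_sum[OF assms, symmetric] by auto
qed

lemma mult_Pm: assumes "d \<ge> 1"
  shows "mat_mult d (Pm d a b) B = (\<lambda>i j. if i \<le> d \<and> j \<le> d then
     a i * form d a (\<lambda>k. B k j) + b i * form d b (\<lambda>k. B k j) else 0)"
proof (intro ext)
  fix i j
  have "(\<Sum>k\<le>d. Pm d a b i k * B k j) = (\<Sum>k\<le>d. (a i * form d a (evec k) + b i * form d b (evec k)) * B k j)"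
    if "i \<le> d" by (rule sum.cong) (auto simp: Pm_def that)
  then show "mat_mult d (Pm d a b) B i j = (if i \<le> d \<and> j \<le> d then
     a i * form d a (\<lambda>k. B k j) + b i * form d b (\<lambda>k. B k j) else 0)"
    unfolding mat_mult_def sum_lin_p form_evec_sum[OF assms, symmetric] by auto
qed

lemma app_wedge: assumes "d \<ge> 1"
  shows "mat_app d (wedge d a b) x = (\<lambda>i. if i \<le> d then
     a i * form d b x - b i * form d a x else 0)"
proof (intro ext)
  fix i
  have "(\<Sum>k\<le>d. wedge d a b i k * x k) = (\<Sum>k\<le>d. (a i * form d b (evec k) - b i * form d a (evec k)) * x k)"
    if "i \<le> d" by (rule sum.cong) (auto simp: wedge_def that)
  then show "mat_app d (wedge d a b) x i = (if i \<le> d then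
     a i * form d b x - b i * form d a x else 0)"
    unfolding mat_app_def sum_lin_m form_evec_sum[OF assms, symmetric] by auto
qed

locale ON =
  fixes d :: nat and a b :: "nat \<Rightarrow> real"
  assumes d1: "d \<ge> 1" and va: "vec_on d a" and vb: "vec_on d b"
    and aa: "form d a a = 1" and bb: "form d b b = 1" and ab: "form d a b = 0"
begin

lemma ba: "form d b a = 0" using ab form_sym by metis

lemma col_wedge: "j \<le> d \<Longrightarrow> (\<lambda>k. wedge d a b k j) = (\<lambda>k. a k * form d b (evec j) - b k * form d a (evec j))"
  using va vb unfolding wedge_def vec_on_def by auto

lemma col_Pm: "j \<le> d \<Longrightarrow> (\<lambda>k. Pm d a b k j) = (\<lambda>k. a k * form d a (evec j) + b k * form d b (evec j))"
  using va vb unfolding Pm_def vec_on_def by auto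

lemma col_id: "j \<le> d \<Longrightarrow> form d x (\<lambda>k. mat_id d k j) = form d x (evec j)"
  by (rule form_cong2) (auto simp: mat_id_def evec_def)

lemma WW: "mat_mult d (wedge d a b) (wedge d a b) = (\<lambda>i j. - Pm d a b i j)"
  apply (subst mult_wedge[OF d1]) by (intro ext) (auto simp: col_wedge form_lin aa bb ab ba Pm_def)

lemma WP: "mat_mult d (wedge d a b) (Pm d a b) = wedge d a b"
  apply (subst mult_wedge[OF d1]) by (intro ext) (auto simp: col_Pm form_lin aa bb ab ba wedge_def)

lemma WI: "mat_mult d (wedge d a b) (mat_id d) = wedge d a b"
  apply (subst mult_wedge[OF d1]) by (intro ext) (auto simp: col_id wedge_def)


lemma P_on: "i > d \<or> j > d \<Longrightarrow> Pm d a b i j = 0" by (auto simp: Pm_def)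
lemma W_on: "i > d \<or> j > d \<Longrightarrow> wedge d a b i j = 0" by (auto simp: wedge_def)

lemma mult_scale2: "mat_mult d A (\<lambda>i j. c * B i j) = (\<lambda>i j. c * mat_mult d A B i j)"
  by (auto simp: mat_mult_def fun_eq_iff sum_distrib_left mult_ac)
lemma WP': "mat_mult d (wedge d a b) (\<lambda>i j. c * Pm d a b i j) = (\<lambda>i j. c * wedge d a b i j)"
  by (simp add: mult_scale2 WP)
lemma WW': "mat_mult d (wedge d a b) (\<lambda>i j. c * wedge d a b i j) = (\<lambda>i j. - c * Pm d a b i j)"
  by (simp add: mult_scale2 WW)

definition Kmat :: "nat \<Rightarrow> nat \<Rightarrow> nat \<Rightarrow> real" where
  "Kmat n = (\<lambda>i j. (-1)^(n div 2) * (if even n then Pm d a b i j else wedge d a b i j))"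

lemma WK: "mat_mult d (wedge d a b) (Kmat n) = Kmat (Suc n)"
proof (cases "even n")
  case True
  then have "Kmat n = (\<lambda>i j. (-1)^(n div 2) * Pm d a b i j)" by (simp add: Kmat_def)
  moreover have "Kmat (Suc n) = (\<lambda>i j. (-1)^(n div 2) * wedge d a b i j)"
    using True by (simp add: Kmat_def)
  ultimately show ?thesis by (simp add: WP')
next
  case False
  then have "Kmat n = (\<lambda>i j. (-1)^(n div 2) * wedge d a b i j)" by (simp add: Kmat_def)
  moreover have "Kmat (Suc n) = (\<lambda>i j. - ((-1)^(n div 2)) * Pm d a b i j)"
    using False by (simp add: Kmat_def fun_eq_iff)
  ultimately show ?thesis by (simp add: WW')
qed

lemma cmult: "mat_mult d (\<lambda>i j. p * cmat A i j) (\<lambda>i j. q * cmat B i j) = (\<lambda>i j. (p*q) * cmat (mat_mult d A B) i j)"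
  by (auto simp: mat_mult_def cmat_def fun_eq_iff sum_distrib_left mult_ac)

lemma cmult1: "mat_mult d (\<lambda>i j. p * cmat A i j) (mat_id d) = (\<lambda>i j. p * cmat (mat_mult d A (mat_id d)) i j)"
  by (auto simp: mat_mult_def cmat_def fun_eq_iff sum_distrib_left mult_ac mat_id_def if_distrib cong: if_cong)

lemma pow_formula: "n \<ge> 1 \<Longrightarrow> mat_pow d (\<lambda>i j. \<tau> * cmat (wedge d a b) i j) n = (\<lambda>i j. \<tau>^n * cmat (Kmat n) i j)"
proof (induction n)
  case 0 then show ?case by simp
next
  case (Suc m)
  show ?case
  proof (cases "m = 0")
    case True
    have "Kmat (Suc 0) = wedge d a b" by (simp add: Kmat_def fun_eq_iff)
    then show ?thesis using True by (simp add: cmult1 WI del: One_nat_def)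
  next
    case False
    then show ?thesis using Suc by (simp add: cmult WK)
  qed
qed

lemma exp_term: "mat_pow d (\<lambda>i j. \<tau> * cmat (wedge d a b) i j) n i j / of_nat (fact n)
   = (if n = 0 then cmat (mat_id d) i j - cmat (Pm d a b) i j else 0)
     + (cos_coeff n *\<^sub>R \<tau>^n) * cmat (Pm d a b) i j + (sin_coeff n *\<^sub>R \<tau>^n) * cmat (wedge d a b) i j"
proof (cases "n = 0")
  case True
  then show ?thesis by (simp add: cos_coeff_def sin_coeff_def cmat_def mat_id_def)
next
  case False
  then have p: "mat_pow d (\<lambda>i j. \<tau> * cmat (wedge d a b) i j) n i j = \<tau>^n * cmat (Kmat n) i j"
    by (simp add: pow_formula)
  show ?thesis
  proof (cases "even n")
    case True
    then show ?thesis using False unfolding p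
      by (simp add: Kmat_def cos_coeff_def sin_coeff_def cmat_def scaleR_conv_of_real field_simps)
  next
    case odd: False
    have "(n - Suc 0) div 2 = n div 2" using odd by (metis One_nat_def odd_two_times_div_two_nat diff_Suc_1 div_mult_self1_is_m zero_less_numeral odd_two_times_div_two_succ)
    then show ?thesis using False odd unfolding p
      by (simp add: Kmat_def cos_coeff_def sin_coeff_def cmat_def scaleR_conv_of_real field_simps)
  qed
qed

lemma exp_formula: "mat_exp d (\<lambda>i j. \<tau> * cmat (wedge d a b) i j) =
   (\<lambda>i j. cmat (mat_id d) i j - cmat (Pm d a b) i j + cos \<tau> * cmat (Pm d a b) i j + sin \<tau> * cmat (wedge d a b) i j)"
proof (intro ext)
  fix i j
  have s0: "(\<lambda>n. if n = 0 then cmat (mat_id d) i j - cmat (Pm d a b) i j else 0) sums (cmat (mat_id d) i j - cmat (Pm d a b) i j)"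
    using sums_single[of 0 "\<lambda>_. cmat (mat_id d) i j - cmat (Pm d a b) i j"] by simp
  have s1: "(\<lambda>n. (cos_coeff n *\<^sub>R \<tau>^n) * cmat (Pm d a b) i j) sums (cos \<tau> * cmat (Pm d a b) i j)"
    by (rule sums_mult2[OF cos_converges])
  have s2: "(\<lambda>n. (sin_coeff n *\<^sub>R \<tau>^n) * cmat (wedge d a b) i j) sums (sin \<tau> * cmat (wedge d a b) i j)"
    by (rule sums_mult2[OF sin_converges])
  have "(\<lambda>n. mat_pow d (\<lambda>i j. \<tau> * cmat (wedge d a b) i j) n i j / of_nat (fact n)) sums
     (cmat (mat_id d) i j - cmat (Pm d a b) i j + cos \<tau> * cmat (Pm d a b) i j + sin \<tau> * cmat (wedge d a b) i j)"
    unfolding exp_term by (intro sums_add s0 s1 s2)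
  then show "mat_exp d (\<lambda>i j. \<tau> * cmat (wedge d a b) i j) i j = cmat (mat_id d) i j - cmat (Pm d a b) i j + cos \<tau> * cmat (Pm d a b) i j + sin \<tau> * cmat (wedge d a b) i j"
    unfolding mat_exp_def by (simp add: sums_iff)
qed


lemma sum_lin4: "(\<Sum>j\<in>S. ((x j :: 'a::comm_ring) - y j + p * y j + q * z j) * w j)
   = (\<Sum>j\<in>S. x j * w j) - (\<Sum>j\<in>S. y j * w j) + p * (\<Sum>j\<in>S. y j * w j) + q * (\<Sum>j\<in>S. z j * w j)"
  by (simp add: sum.distrib sum_subtractf sum_distrib_left algebra_simps)

lemma sum_ofr: "(\<Sum>j\<in>S. cmat A i j * cvec c j) = complex_of_real (\<Sum>j\<in>S. A i j * c j)"
  by (simp add: cmat_def cvec_def)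

lemma app_Pm: "i \<le> d \<Longrightarrow> (\<Sum>j\<le>d. Pm d a b i j * c j) = a i * form d a c + b i * form d b c"
proof -
  assume i: "i \<le> d"
  have "(\<Sum>j\<le>d. Pm d a b i j * c j) = (\<Sum>j\<le>d. (a i * form d a (evec j) + b i * form d b (evec j)) * c j)"
    by (rule sum.cong) (auto simp: Pm_def i)
  then show ?thesis unfolding sum_lin_p form_evec_sum[OF d1, symmetric] .
qed

lemma app_W: "i \<le> d \<Longrightarrow> (\<Sum>j\<le>d. wedge d a b i j * c j) = a i * form d b c - b i * form d a c"
  using app_wedge[OF d1, of a b c] unfolding mat_app_def by (auto simp: fun_eq_iff dest: spec[of _ i])

lemma app_I: "i \<le> d \<Longrightarrow> (\<Sum>j\<le>d. mat_id d i j * (c::nat\<Rightarrow>real) j) = c i"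
proof -
  assume i: "i \<le> d"
  have "(\<Sum>j\<le>d. mat_id d i j * c j) = (\<Sum>j\<le>d. if j = i then c j else 0)"
    by (rule sum.cong) (auto simp: mat_id_def)
  then show ?thesis using i by simp
qed

lemma exp_app: assumes vc: "vec_on d c"
  shows "mat_app d (mat_exp d (\<lambda>i j. \<tau> * cmat (wedge d a b) i j)) (cvec c) =
   (\<lambda>i. complex_of_real (c i) + (cos \<tau> - 1) * complex_of_real (form d a c * a i + form d b c * b i)
       + sin \<tau> * complex_of_real (form d b c * a i - form d a c * b i))"
proof (intro ext)
  fix i
  show "mat_app d (mat_exp d (\<lambda>i j. \<tau> * cmat (wedge d a b) i j)) (cvec c) i =
   complex_of_real (c i) + (cos \<tau> - 1) * complex_of_real (form d a c * a i + form d b c * b i)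
       + sin \<tau> * complex_of_real (form d b c * a i - form d a c * b i)"
  proof (cases "i \<le> d")
    case True
    have "mat_app d (mat_exp d (\<lambda>i j. \<tau> * cmat (wedge d a b) i j)) (cvec c) i =
      (\<Sum>j\<le>d. (cmat (mat_id d) i j - cmat (Pm d a b) i j + cos \<tau> * cmat (Pm d a b) i j + sin \<tau> * cmat (wedge d a b) i j) * cvec c j)"
      using True by (simp add: mat_app_def exp_formula)
    also have "\<dots> = complex_of_real (\<Sum>j\<le>d. mat_id d i j * c j) - complex_of_real (\<Sum>j\<le>d. Pm d a b i j * c j)
       + cos \<tau> * complex_of_real (\<Sum>j\<le>d. Pm d a b i j * c j) + sin \<tau> * complex_of_real (\<Sum>j\<le>d. wedge d a b i j * c j)"
      by (simp only: sum_lin4 sum_ofr)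
    also have "\<dots> = complex_of_real (c i) + (cos \<tau> - 1) * complex_of_real (form d a c * a i + form d b c * b i)
       + sin \<tau> * complex_of_real (form d b c * a i - form d a c * b i)"
      unfolding app_Pm[OF True] app_W[OF True] app_I[OF True] by (simp add: algebra_simps)
    finally show ?thesis .
  next
    case False
    then show ?thesis using va vb vc by (simp add: mat_app_def vec_on_def)
  qed
qed


lemma form_pi0: "d \<ge> 1 \<Longrightarrow> u 0 = 0 \<Longrightarrow> u d = 0 \<Longrightarrow> form d u u \<le> (0::real)"
  unfolding form_def by (simp add: sum_nonneg)

lemma orth_w: assumes "\<And>i. w i = c i - form d a c * a i - form d b c * b i"
  shows "form d w a = 0" "form d w b = 0" "form d w w = form d c c - (form d a c)^2 - (form d b c)^2"
proof -
  have w: "w = (\<lambda>i. c i - form d a c * a i - form d b c * b i)" using assms by auto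
  show "form d w a = 0" "form d w b = 0" unfolding w by (simp_all add: form_lin aa bb ab ba form_sym[of d c])
  have "form d w x = form d c x - form d a c * form d a x - form d b c * form d b x" for x
    unfolding w by (simp add: form_lin)
  note wx = this
  have aw: "form d a w = 0" "form d b w = 0" using \<open>form d w a = 0\<close> \<open>form d w b = 0\<close> form_sym by metis+
  have "form d w w = form d c w"
    unfolding wx[of w] aw by simp
  also have "\<dots> = form d w c" by (rule form_sym)
  also have "\<dots> = form d c c - (form d a c)^2 - (form d b c)^2"
    unfolding wx[of c] by (simp add: power2_eq_square)
  finally show "form d w w = form d c c - (form d a c)^2 - (form d b c)^2" .
qed

lemma key_ineq: assumes wa: "form d w a = 0" and wb: "form d w b = 0"
  shows "(a 0 * w d - a d * w 0)^2 + (b 0 * w d - b d * w 0)^2 + (a 0 * b d - a d * b 0)^2 * form d w w \<le> 0"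
proof -
  define A where "A = a 0 * w d - a d * w 0"
  define B where "B = b 0 * w d - b d * w 0"
  define P where "P = a 0 * b d - a d * b 0"
  define u where "u = (\<lambda>i. B * a i - A * b i + P * w i)"
  have "u 0 = 0" "u d = 0" unfolding u_def A_def B_def P_def by (simp_all add: algebra_simps)
  then have "form d u u \<le> 0" using form_pi0 d1 by blast
  moreover have "form d u u = B^2 + A^2 + P^2 * form d w w"
    unfolding u_def by (simp add: form_lin aa bb ab ba wa wb form_sym[of d a w] form_sym[of d b w] power2_eq_square algebra_simps)
  ultimately show ?thesis unfolding A_def B_def P_def by simp
qed

lemma sign_alg:
  fixes sh ch m1 m2 A B P ww :: real
  assumes "sh > 0" "ch \<ge> 1" "P > 0" "A^2 + B^2 + P^2 * ww \<le> 0" "ww = 1 - (m1^2 + m2^2)"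
  shows "sh * (ch * (m1^2 + m2^2) * P + m2 * A - m1 * B) > 0"
proof -
  define r2 where "r2 = m1^2 + m2^2"
  have ww0: "ww \<le> 0" using assms(3,4) by (smt (verit) mult_pos_pos zero_less_power2 power2_eq_square sum_power2_ge_zero)
  then have r1: "r2 \<ge> 1" using assms(5) r2_def by simp
  have cs: "(m2 * A - m1 * B)^2 \<le> r2 * (A^2 + B^2)"
  proof -
    have "r2 * (A^2 + B^2) - (m2 * A - m1 * B)^2 = (m1 * A + m2 * B)^2" unfolding r2_def by (simp add: power2_eq_square algebra_simps)
    then show ?thesis by (smt (verit) zero_le_power2)
  qed
  have "r2 * (A^2 + B^2) \<le> r2 * ((r2 - 1) * P^2)"
    using assms(4,5) r1 r2_def by (intro mult_left_mono) (auto simp: algebra_simps)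
  also have "\<dots> < r2 * (r2 * P^2)" using r1 assms(3) by simp
  also have "\<dots> \<le> (ch * r2 * P)^2"
  proof -
    have "ch^2 \<ge> 1" using assms(2) by (simp add: one_le_power)
    then have "r2 * (r2 * P^2) * 1 \<le> r2 * (r2 * P^2) * ch^2" using r1 by (intro mult_left_mono) auto
    then show ?thesis by (simp add: power2_eq_square algebra_simps)
  qed
  finally have "(m2 * A - m1 * B)^2 < (ch * r2 * P)^2" using cs by linarith
  moreover have "ch * r2 * P > 0" using assms r1 by simp
  ultimately have "\<bar>m2 * A - m1 * B\<bar> < ch * r2 * P"
    by (metis abs_of_pos power2_abs power_less_imp_less_base less_eq_real_def abs_ge_zero)
  then have "ch * r2 * P + m2 * A - m1 * B > 0" by linarith
  then show ?thesis using assms(1) r2_def by simp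
qed


lemma F3: assumes wa: "form d w a = 0" and wb: "form d w b = 0"
  shows "form d (\<lambda>i. w i + p * a i + q * b i) (\<lambda>i. w i + p * a i + q * b i) = form d w w + p^2 + q^2"
    "form d (\<lambda>i. w i + p * a i + q * b i) (\<lambda>i. p' * a i + q' * b i) = p * p' + q * q'"
    "form d (\<lambda>i. p * a i + q * b i) (\<lambda>i. p' * a i + q' * b i) = p * p' + q * q'"
proof -
  have aw: "form d a w = 0" "form d b w = 0" using wa wb form_sym by metis+
  show "form d (\<lambda>i. w i + p * a i + q * b i) (\<lambda>i. w i + p * a i + q * b i) = form d w w + p^2 + q^2"
    by (simp add: form_lin aa bb ab ba wa wb aw power2_eq_square)
  show "form d (\<lambda>i. w i + p * a i + q * b i) (\<lambda>i. p' * a i + q' * b i) = p * p' + q * q'"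
    by (simp add: form_lin aa bb ab ba wa wb aw)
  show "form d (\<lambda>i. p * a i + q * b i) (\<lambda>i. p' * a i + q' * b i) = p * p' + q * q'"
    by (simp add: form_lin aa bb ab ba)
qed

lemma fwd:
  assumes P: "a 0 * b d - a d * b 0 > 0" and vc: "vec_on d c" and cc: "form d c c = 1" and t: "Im \<tau> > 0"
  defines "z \<equiv> mat_app d (mat_exp d (\<lambda>i j. \<tau> * cmat (wedge d a b) i j)) (cvec c)"
  shows "vec_on d z \<and>
            form d (\<lambda>i. Re (z i)) (\<lambda>i. Re (z i)) - form d (\<lambda>i. Im (z i)) (\<lambda>i. Im (z i)) = 1 \<and>
            form d (\<lambda>i. Re (z i)) (\<lambda>i. Im (z i)) = 0 \<and>
            form d (\<lambda>i. Im (z i)) (\<lambda>i. Im (z i)) > 0 \<and>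
            Im (z 0) * Re (z d) - Re (z 0) * Im (z d) > 0"
proof -
  define \<alpha> where "\<alpha> = form d a c"
  define \<beta> where "\<beta> = form d b c"
  define w where "w = (\<lambda>i. c i - \<alpha> * a i - \<beta> * b i)"
  define s where "s = Re \<tau>"
  define t where "t = Im \<tau>"
  define ch where "ch = (exp t + exp (- t)) / 2"
  define sh where "sh = (exp t - exp (- t)) / 2"
  define m1 where "m1 = \<alpha> * cos s + \<beta> * sin s"
  define m2 where "m2 = \<beta> * cos s - \<alpha> * sin s"
  have wo: "form d w a = 0" "form d w b = 0" "form d w w = form d c c - \<alpha>^2 - \<beta>^2"
    using orth_w[of w c] unfolding w_def \<alpha>_def \<beta>_def by auto
  have zi: "z i = complex_of_real (c i) + (cos \<tau> - 1) * complex_of_real (\<alpha> * a i + \<beta> * b i)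
       + sin \<tau> * complex_of_real (\<beta> * a i - \<alpha> * b i)" for i
    unfolding z_def exp_app[OF vc] \<alpha>_def \<beta>_def by simp
  have ReZ: "(\<lambda>i. Re (z i)) = (\<lambda>i. w i + (ch * m1) * a i + (ch * m2) * b i)"
  proof -
    have rc: "Re (cos \<tau>) = cos s * ch" "Re (sin \<tau>) = sin s * ch"
      unfolding Re_cos Re_sin ch_def s_def t_def by simp_all
    have "Re (z i) = c i + (Re (cos \<tau>) - 1) * (\<alpha> * a i + \<beta> * b i) + Re (sin \<tau>) * (\<beta> * a i - \<alpha> * b i)" for i
      unfolding zi by simp
    then show ?thesis unfolding rc by (auto simp: fun_eq_iff w_def m1_def m2_def algebra_simps)
  qed
  have ImZ: "(\<lambda>i. Im (z i)) = (\<lambda>i. (sh * m2) * a i + (- (sh * m1)) * b i)"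
  proof -
    have ic: "Im (cos \<tau>) = - sin s * sh" "Im (sin \<tau>) = cos s * sh"
      unfolding Im_cos Im_sin sh_def s_def t_def by (simp_all add: field_simps)
    have "Im (z i) = Im (cos \<tau>) * (\<alpha> * a i + \<beta> * b i) + Im (sin \<tau>) * (\<beta> * a i - \<alpha> * b i)" for i
      unfolding zi by simp
    then show ?thesis unfolding ic by (auto simp: fun_eq_iff m1_def m2_def algebra_simps)
  qed
  have chsh: "ch^2 - sh^2 = 1"
  proof -
    have "exp t * exp (- t) = 1" by (simp add: exp_minus)
    then show ?thesis unfolding ch_def sh_def by (simp add: power2_eq_square field_simps)
  qed
  have shp: "sh > 0" using t unfolding sh_def t_def by simp
  have chp: "ch > 0" unfolding ch_def by (simp add: add_pos_pos)
  have ch1: "ch \<ge> 1"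
  proof (rule ccontr)
    assume "\<not> 1 \<le> ch"
    then have "ch * ch < 1 * 1" using chp by (intro mult_strict_mono) auto
    then have "ch^2 < 1" by (simp add: power2_eq_square)
    then show False using chsh by (smt (verit) zero_le_power2)
  qed
  have r: "m1^2 + m2^2 = \<alpha>^2 + \<beta>^2"
  proof -
    have "m1^2 + m2^2 - (\<alpha>^2 + \<beta>^2) = (\<alpha>^2 + \<beta>^2) * ((sin s)^2 + (cos s)^2 - 1)"
      unfolding m1_def m2_def power2_eq_square by algebra
    then show ?thesis by simp
  qed
  have ww: "form d w w = 1 - (m1^2 + m2^2)" using wo(3) cc r by simp
  define A where "A = a 0 * w d - a d * w 0"
  define B where "B = b 0 * w d - b d * w 0"
  define PP where "PP = a 0 * b d - a d * b 0"
  have KI: "A^2 + B^2 + PP^2 * form d w w \<le> 0"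
    using key_ineq[OF wo(1,2)] unfolding A_def B_def PP_def by simp
  have ww0: "form d w w \<le> 0"
  proof (rule ccontr)
    assume "\<not> form d w w \<le> 0"
    then have "PP^2 * form d w w > 0" using P PP_def by simp
    then show False using KI by (smt (verit) zero_le_power2)
  qed
  have r1: "m1^2 + m2^2 \<ge> 1" using ww ww0 by simp
  have vz: "vec_on d z" unfolding z_def vec_on_def mat_app_def by simp
  have e1: "form d (\<lambda>i. Re (z i)) (\<lambda>i. Re (z i)) - form d (\<lambda>i. Im (z i)) (\<lambda>i. Im (z i)) = 1"
  proof -
    have "form d (\<lambda>i. Re (z i)) (\<lambda>i. Re (z i)) - form d (\<lambda>i. Im (z i)) (\<lambda>i. Im (z i))
       = 1 - (m1^2 + m2^2) + (ch^2 - sh^2) * (m1^2 + m2^2)"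
      unfolding ReZ ImZ F3[OF wo(1,2)] ww by (simp add: power2_eq_square algebra_simps)
    then show ?thesis using chsh by simp
  qed
  have e2: "form d (\<lambda>i. Re (z i)) (\<lambda>i. Im (z i)) = 0"
    unfolding ReZ ImZ F3[OF wo(1,2)] by (simp add: algebra_simps)
  have e3: "form d (\<lambda>i. Im (z i)) (\<lambda>i. Im (z i)) > 0"
  proof -
    have "form d (\<lambda>i. Im (z i)) (\<lambda>i. Im (z i)) = sh^2 * (m1^2 + m2^2)"
      unfolding ImZ F3[OF wo(1,2)] by (simp add: power2_eq_square algebra_simps)
    then show ?thesis using shp r1 by simp
  qed
  have e4: "Im (z 0) * Re (z d) - Re (z 0) * Im (z d) > 0"
  proof -
    have re: "Re (z i) = w i + (ch * m1) * a i + (ch * m2) * b i" for i using ReZ by (simp add: fun_eq_iff)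
    have im: "Im (z i) = (sh * m2) * a i + (- (sh * m1)) * b i" for i using ImZ by (simp add: fun_eq_iff)
    have "Im (z 0) * Re (z d) - Re (z 0) * Im (z d) = sh * (ch * (m1^2 + m2^2) * PP + m2 * A - m1 * B)"
      unfolding re im A_def B_def PP_def by (simp add: power2_eq_square algebra_simps)
    also have "\<dots> > 0" using sign_alg[OF shp ch1 _ KI ww] P PP_def by simp
    finally show ?thesis .
  qed
  show ?thesis using vz e1 e2 e3 e4 by blast
qed

end



context ON begin
lemma det_ne0: "a 0 * b d - a d * b 0 \<noteq> 0"
proof
  assume D: "a 0 * b d - a d * b 0 = 0"
  have z: "form d (\<lambda>i. (0::real)) (\<lambda>i. 0) = 0" "form d (\<lambda>i. (0::real)) a = 0" "form d (\<lambda>i. (0::real)) b = 0"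
    by (simp_all add: form_def)
  have F: "form d (\<lambda>i. p * a i + q * b i) (\<lambda>i. p * a i + q * b i) = p^2 + q^2" for p q
    using F3(3)[OF z(2,3), of p q p q] by (simp add: power2_eq_square)
  have "form d (\<lambda>i. b 0 * a i + (- a 0) * b i) (\<lambda>i. b 0 * a i + (- a 0) * b i) \<le> 0"
    by (rule form_pi0[OF d1]) (use D in \<open>simp_all add: algebra_simps\<close>)
  then have 1: "a 0 = 0" "b 0 = 0" unfolding F by (smt (verit) zero_le_power2 power2_eq_square mult_eq_0_iff)+
  have "form d (\<lambda>i. b d * a i + (- a d) * b i) (\<lambda>i. b d * a i + (- a d) * b i) \<le> 0"
    by (rule form_pi0[OF d1]) (use D in \<open>simp_all add: algebra_simps\<close>)
  then have 2: "a d = 0" "b d = 0" unfolding F by (smt (verit) zero_le_power2 power2_eq_square mult_eq_0_iff)+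
  have "form d a a \<le> 0" by (rule form_pi0[OF d1]) (use 1 2 in auto)
  then show False using aa by simp
qed
end

lemma app_id: "vec_on d x \<Longrightarrow> mat_app d (mat_id d) (x::nat\<Rightarrow>'a::comm_ring_1) = x"
proof (intro ext)
  fix i assume v: "vec_on d x"
  show "mat_app d (mat_id d) x i = x i"
  proof (cases "i \<le> d")
    case True
    have "(\<Sum>j\<le>d. mat_id d i j * x j) = (\<Sum>j\<le>d. if j = i then x j else 0)"
      by (rule sum.cong) (auto simp: mat_id_def)
    then show ?thesis using True by (simp add: mat_app_def)
  qed (use v in \<open>auto simp: mat_app_def vec_on_def\<close>)
qed

lemma id_on: "mat_on d (mat_id d)" by (simp add: mat_on_def mat_id_def)
lemma id_O: "mat_id d \<in> Ogroup d"
  unfolding Ogroup_def using id_on by (simp add: app_id)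

lemma vec_app: "vec_on d (mat_app d A x)" by (simp add: vec_on_def mat_app_def)

lemma app_mult: "mat_app d (mat_mult d A B) x = mat_app d A (mat_app d B x)"
proof (intro ext)
  fix i
  show "mat_app d (mat_mult d A B) x i = mat_app d A (mat_app d B x) i"
  proof (cases "i \<le> d")
    case True
    have "(\<Sum>j\<le>d. mat_mult d A B i j * x j) = (\<Sum>j\<le>d. \<Sum>k\<le>d. A i k * B k j * x j)"
      using True by (auto simp: mat_mult_def sum_distrib_right intro!: sum.cong)
    also have "\<dots> = (\<Sum>k\<le>d. \<Sum>j\<le>d. A i k * B k j * x j)" by (rule sum.swap)
    also have "\<dots> = (\<Sum>k\<le>d. A i k * mat_app d B x k)"
      by (auto simp: mat_app_def sum_distrib_left mult.assoc intro!: sum.cong)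
    finally show ?thesis using True by (simp add: mat_app_def)
  qed (simp add: mat_app_def)
qed

lemma mult_on: "mat_on d (mat_mult d A B)" by (simp add: mat_on_def mat_mult_def)
lemma mult_O: assumes "A \<in> Ogroup d" "B \<in> Ogroup d" shows "mat_mult d A B \<in> Ogroup d"
proof -
  have "form d (mat_app d (mat_mult d A B) x) (mat_app d (mat_mult d A B) y) = form d x y"
    if "vec_on d x" "vec_on d y" for x y
  proof -
    have "form d (mat_app d A (mat_app d B x)) (mat_app d A (mat_app d B y)) = form d (mat_app d B x) (mat_app d B y)"
      using assms(1) vec_app unfolding Ogroup_def by blast
    also have "\<dots> = form d x y" using assms(2) that unfolding Ogroup_def by blast
    finally show ?thesis unfolding app_mult .
  qed
  then show ?thesis using mult_on unfolding Ogroup_def by auto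
qed

lemma mult_id: "mat_on d A \<Longrightarrow> mat_mult d A (mat_id d) = (A::nat\<Rightarrow>nat\<Rightarrow>'a::comm_ring_1)"
proof (intro ext)
  fix i j assume m: "mat_on d A"
  show "mat_mult d A (mat_id d) i j = A i j"
  proof (cases "i \<le> d \<and> j \<le> d")
    case True
    have "(\<Sum>k\<le>d. A i k * mat_id d k j) = (\<Sum>k\<le>d. if k = j then A i k else 0)"
      by (rule sum.cong) (auto simp: mat_id_def)
    then show ?thesis using True by (simp add: mat_mult_def)
  qed (use m in \<open>auto simp: mat_mult_def mat_on_def\<close>)
qed

lemma cont_entry: "continuous_on S (\<lambda>B::nat\<Rightarrow>nat\<Rightarrow>real. B k j)"
  by (rule continuous_on_subset[OF continuous_on_product_then_coordinatewise[OF continuous_on_product_coordinates]]) auto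

lemma cont_mult: "continuous_on S (\<lambda>B. mat_mult d (A::nat\<Rightarrow>nat\<Rightarrow>real) B)"
proof (intro continuous_on_coordinatewise_then_product)
  fix i j
  show "continuous_on S (\<lambda>B. mat_mult d A B i j)"
  proof (cases "i \<le> d \<and> j \<le> d")
    case True
    then have "(\<lambda>B. mat_mult d A B i j) = (\<lambda>B. \<Sum>k\<le>d. A i k * B k j)" by (simp add: mat_mult_def fun_eq_iff)
    moreover have "continuous_on S (\<lambda>B::nat\<Rightarrow>nat\<Rightarrow>real. \<Sum>k\<le>d. A i k * B k j)"
      by (intro continuous_on_sum continuous_on_mult_left cont_entry)
    ultimately show ?thesis by metis
  next
    case False
    then have "(\<lambda>B. mat_mult d A B i j) = (\<lambda>B. 0)" by (auto simp: mat_mult_def fun_eq_iff)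
    then show ?thesis by (metis continuous_on_const)
  qed
qed

lemma G0_sub: "G0 d \<subseteq> Ogroup d" unfolding G0_def by (rule connected_component_subset)
lemma id_G0: "mat_id d \<in> G0 d" unfolding G0_def using id_O by simp

lemma mult_G0: assumes A: "A \<in> G0 d" and B: "B \<in> G0 d" shows "mat_mult d A B \<in> G0 d"
proof -
  have AO: "A \<in> Ogroup d" using A G0_sub by auto
  have "mat_mult d A ` G0 d \<subseteq> connected_component_set (Ogroup d) A"
  proof (rule connected_component_maximal)
    show "A \<in> mat_mult d A ` G0 d"
      using id_G0 mult_id[of d A] AO unfolding Ogroup_def by (metis (no_types, lifting) image_eqI mem_Collect_eq)
    show "connected (mat_mult d A ` G0 d)"
      by (rule connected_continuous_image[OF cont_mult]) (simp add: G0_def connected_connected_component)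
    show "mat_mult d A ` G0 d \<subseteq> Ogroup d" using G0_sub by (auto intro: mult_O[OF AO])
  qed
  also have "\<dots> = G0 d" unfolding G0_def using A[unfolded G0_def] by (rule connected_component_eq)
  finally show ?thesis using B by auto
qed

lemma path_G0:
  assumes c: "continuous_on {0..1::real} \<gamma>" and O: "\<And>s. s \<in> {0..1} \<Longrightarrow> \<gamma> s \<in> Ogroup d"
    and g0: "\<gamma> 0 = mat_id d"
  shows "\<gamma> 1 \<in> G0 d"
proof -
  have "\<gamma> ` {0..1} \<subseteq> G0 d" unfolding G0_def
  proof (rule connected_component_maximal)
    show "mat_id d \<in> \<gamma> ` {0..1}" using g0 by (metis atLeastAtMost_iff image_eqI order_refl zero_le_one)
    show "connected (\<gamma> ` {0..1})" by (rule connected_continuous_image[OF c]) simp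
    show "\<gamma> ` {0..1} \<subseteq> Ogroup d" using O by auto
  qed
  then show ?thesis by auto
qed

lemma app_evec: "mat_on d A \<Longrightarrow> j \<le> d \<Longrightarrow> mat_app d A (evec j) = (\<lambda>i. (A::nat\<Rightarrow>nat\<Rightarrow>'a::comm_ring_1) i j)"
proof (intro ext)
  fix i assume m: "mat_on d A" and j: "j \<le> d"
  show "mat_app d A (evec j) i = A i j"
  proof (cases "i \<le> d")
    case True
    have "(\<Sum>k\<le>d. A i k * evec j k) = (\<Sum>k\<le>d. if k = j then A i k else 0)"
      by (rule sum.cong) (auto simp: evec_def)
    then show ?thesis using True j by (simp add: mat_app_def)
  qed (use m in \<open>auto simp: mat_app_def mat_on_def\<close>)
qed

lemma evec_on: "j \<le> d \<Longrightarrow> vec_on d (evec j)" by (auto simp: vec_on_def evec_def)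

lemma form_ee: "d \<ge> 1 \<Longrightarrow> form d (evec 0) (evec 0) = (1::real)" "d \<ge> 1 \<Longrightarrow> form d (evec d) (evec d) = (1::real)"
  "d \<ge> 1 \<Longrightarrow> form d (evec 0) (evec d) = (0::real)" "d \<ge> 1 \<Longrightarrow> form d (evec d) (evec 0) = (0::real)"
  by (auto simp: form_evec) (auto simp: evec_def)

lemma cols_ON: assumes "L \<in> Ogroup d" "d \<ge> 1"
  shows "ON d (\<lambda>i. L i 0) (\<lambda>i. L i d)"
proof -
  have m: "mat_on d L" using assms unfolding Ogroup_def by auto
  have p: "form d (mat_app d L x) (mat_app d L y) = form d x y" if "vec_on d x" "vec_on d y" for x y
    using assms that unfolding Ogroup_def by auto
  have c0: "mat_app d L (evec 0) = (\<lambda>i. L i 0)" and cd: "mat_app d L (evec d) = (\<lambda>i. L i d)"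
    using app_evec[OF m] by auto
  show ?thesis
    using p[of "evec 0" "evec 0"] p[of "evec d" "evec d"] p[of "evec 0" "evec d"] form_ee[OF assms(2)] evec_on[of 0 d] evec_on[of d d]
    unfolding c0 cd using assms(2) by unfold_locales (auto simp: vec_on_def m[unfolded mat_on_def])
qed

lemma det_G0: assumes "L \<in> G0 d" "d \<ge> 1"
  shows "L 0 0 * L d d - L 0 d * L d 0 > 0"
proof (rule ccontr)
  define f where "f = (\<lambda>L::nat\<Rightarrow>nat\<Rightarrow>real. L 0 0 * L d d - L 0 d * L d 0)"
  assume nt: "\<not> ?thesis"
  have fl: "f L < 0"
  proof -
    have "L \<in> Ogroup d" using assms G0_sub by auto
    then have "f L \<noteq> 0" using ON.det_ne0[OF cols_ON[OF _ assms(2)]] unfolding f_def by (simp add: algebra_simps)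
    then show ?thesis using nt f_def by simp
  qed
  have f1: "f (mat_id d) = 1" using assms(2) by (simp add: f_def mat_id_def)
  have conn: "connected (f ` G0 d)"
    by (rule connected_continuous_image) (auto simp: f_def G0_def connected_connected_component intro!: continuous_intros cont_entry)
  have "0 \<in> f ` G0 d"
    by (rule connectedD_interval[OF conn, of "f L" 1]) (use assms(1) id_G0 fl f1 in auto)
  then obtain K where "K \<in> G0 d" "f K = 0" by auto
  moreover have "K \<in> Ogroup d" using \<open>K \<in> G0 d\<close> G0_sub by auto
  ultimately show False using ON.det_ne0[OF cols_ON[OF _ assms(2)]] unfolding f_def by (simp add: algebra_simps)
qed



definition Tm :: "nat \<Rightarrow> (nat \<Rightarrow> real) \<Rightarrow> (nat \<Rightarrow> real) \<Rightarrow> nat \<Rightarrow> nat \<Rightarrow> real" where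
  "Tm d e v = (\<lambda>i j. if i \<le> d \<and> j \<le> d then mat_id d i j
      - (v i + e i) * form d (\<lambda>k. v k + e k) (evec j) / (1 + form d e v) + 2 * v i * form d e (evec j) else 0)"

lemma sum_lin_T: "(\<Sum>j\<in>S. ((I j :: real) - p * f j / K + q * g j) * x j)
   = (\<Sum>j\<in>S. I j * x j) - p * (\<Sum>j\<in>S. f j * x j) / K + q * (\<Sum>j\<in>S. g j * x j)"
  by (simp add: sum.distrib sum_subtractf sum_distrib_left sum_divide_distrib algebra_simps)

lemma app_I0: "i \<le> d \<Longrightarrow> (\<Sum>j\<le>d. mat_id d i j * (c::nat\<Rightarrow>real) j) = c i"
proof -
  assume i: "i \<le> d"
  have "(\<Sum>j\<le>d. mat_id d i j * c j) = (\<Sum>j\<le>d. if j = i then c j else 0)"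
    by (rule sum.cong) (auto simp: mat_id_def)
  then show ?thesis using i by simp
qed

lemma app_Tm: assumes "d \<ge> 1" "vec_on d x"
  shows "mat_app d (Tm d e v) x = (\<lambda>i. if i \<le> d then x i - (v i + e i) * form d (\<lambda>k. v k + e k) x / (1 + form d e v)
      + 2 * v i * form d e x else 0)"
proof (intro ext)
  fix i
  show "mat_app d (Tm d e v) x i = (if i \<le> d then x i - (v i + e i) * form d (\<lambda>k. v k + e k) x / (1 + form d e v)
      + 2 * v i * form d e x else 0)"
  proof (cases "i \<le> d")
    case True
    have "(\<Sum>j\<le>d. Tm d e v i j * x j) = (\<Sum>j\<le>d. (mat_id d i j - (v i + e i) * form d (\<lambda>k. v k + e k) (evec j) / (1 + form d e v)
      + 2 * v i * form d e (evec j)) * x j)"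
      by (rule sum.cong) (auto simp: Tm_def True)
    also have "\<dots> = x i - (v i + e i) * form d (\<lambda>k. v k + e k) x / (1 + form d e v) + 2 * v i * form d e x"
      unfolding sum_lin_T form_evec_sum[OF assms(1), symmetric] app_I0[OF True] ..
    finally show ?thesis using True by (simp add: mat_app_def)
  qed (simp add: mat_app_def)
qed

lemma T_alg: fixes xe xv ye yv kk :: real
  assumes K: "1 + kk \<noteq> 0"
  shows "(- (yv + ye) / (1 + kk)) * xe + (- (yv + ye) / (1 + kk) + 2 * ye) * xv + (- (xv + xe) / (1 + kk)) * ye
   + (- (xv + xe) / (1 + kk)) * (- (yv + ye) / (1 + kk)) * 1
   + (- (xv + xe) / (1 + kk)) * (- (yv + ye) / (1 + kk) + 2 * ye) * kk
   + (- (xv + xe) / (1 + kk) + 2 * xe) * yv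
   + (- (xv + xe) / (1 + kk) + 2 * xe) * (- (yv + ye) / (1 + kk)) * kk
   + (- (xv + xe) / (1 + kk) + 2 * xe) * (- (yv + ye) / (1 + kk) + 2 * ye) * 1 = 0"
proof -
  define K where "K = 1 + kk"
  have kk: "kk = K - 1" unfolding K_def by simp
  have K0: "K \<noteq> 0" using K K_def by simp
  show ?thesis unfolding K_def[symmetric] kk using K0
    by (simp add: field_simps power2_eq_square)
qed

lemma form3: "form d (\<lambda>i. x i + p * e i + q * v i) (\<lambda>i. y i + p' * e i + q' * v i) =
  form d x y + p' * form d x e + q' * form d x v + p * form d e y + p * p' * form d e e + p * q' * form d e v
  + q * form d v y + q * p' * form d v e + q * q' * form d v v"
  by (simp add: form_lin algebra_simps)

lemma Tm_on: "mat_on d (Tm d e v)" by (simp add: mat_on_def Tm_def)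

locale TT =
  fixes d :: nat and e v :: "nat \<Rightarrow> real"
  assumes d1: "d \<ge> 1" and ve: "vec_on d e" and vv: "vec_on d v"
    and ee: "form d e e = 1" and vv1: "form d v v = 1" and k: "1 + form d e v \<noteq> 0"
begin

lemma appT: "vec_on d x \<Longrightarrow> mat_app d (Tm d e v) x = (\<lambda>i. x i + (- (form d v x + form d e x) / (1 + form d e v)) * e i
   + (- (form d v x + form d e x) / (1 + form d e v) + 2 * form d e x) * v i)"
proof -
  assume x: "vec_on d x"
  have N: "form d (\<lambda>k. v k + e k) x = form d v x + form d e x" by (simp add: form_lin)
  have pt: "xx - (vv + ee) * (a + b) / K + 2 * vv * c = xx + (- (a + b) / K) * ee + (- (a + b) / K + 2 * c) * vv"
    if "K \<noteq> 0" for xx vv ee a b c K :: real using that by (simp add: field_simps)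
  show ?thesis unfolding app_Tm[OF d1 x] N using x ve vv k pt by (auto simp: fun_eq_iff vec_on_def)
qed

lemma T_O: "Tm d e v \<in> Ogroup d"
proof -
  have "form d (mat_app d (Tm d e v) x) (mat_app d (Tm d e v) y) = form d x y" if "vec_on d x" "vec_on d y" for x y
  proof -
    define K where "K = 1 + form d e v"
    have K: "K \<noteq> 0" using k K_def by simp
    have s: "form d x e = form d e x" "form d x v = form d v x" "form d v e = form d e v" using form_sym by metis+
    show ?thesis unfolding appT[OF that(1)] appT[OF that(2)] form3 s ee vv1
      using T_alg[where xe="form d e x" and xv="form d v x" and ye="form d e y" and yv="form d v y", OF k] by linarith
  qed
  then show ?thesis using Tm_on unfolding Ogroup_def by auto
qed

lemma T_e: "mat_app d (Tm d e v) e = v"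
  using k unfolding appT[OF ve] by (simp add: ee form_sym[of d v e] field_simps)

lemma T_fix: "vec_on d x \<Longrightarrow> form d e x = 0 \<Longrightarrow> form d v x = 0 \<Longrightarrow> mat_app d (Tm d e v) x = x"
  unfolding appT by simp

end

lemma Tm_self: assumes "vec_on d e" "form d e e = 1" shows "Tm d e e = mat_id d"
proof (intro ext)
  fix i j
  have "form d (\<lambda>k. e k + e k) (evec j) = 2 * form d e (evec j)" by (simp add: form_lin)
  then show "Tm d e e i j = mat_id d i j" using assms by (simp add: Tm_def mat_id_def)
qed


definition sg :: "nat \<Rightarrow> nat \<Rightarrow> real" where
  "sg d j = (if j = 0 \<or> j = d then 1 else if j < d then -1 else 0)"

lemma form_evec_sg: "d \<ge> 1 \<Longrightarrow> form d (b::nat\<Rightarrow>real) (evec j) = sg d j * b j"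
  by (simp add: form_evec sg_def)

lemma T_G0: assumes d1: "d \<ge> 1" and ve: "vec_on d e" and vv: "vec_on d v"
    and ee: "form d e e = 1" and vv1: "form d v v = 1" and kp: "form d e v > 0"
  shows "Tm d e v \<in> G0 d"
proof -
  define k where "k = form d e v"
  define Q where "Q = (\<lambda>\<sigma>::real. (1-\<sigma>)^2 + 2*\<sigma>*(1-\<sigma>)*k + \<sigma>^2)"
  define vs where "vs = (\<lambda>\<sigma> i. ((1-\<sigma>) * e i + \<sigma> * v i) / sqrt (Q \<sigma>))"
  have Qpos: "Q \<sigma> > 0" if "\<sigma> \<in> {0..1}" for \<sigma>
  proof -
    have "(1-\<sigma>)^2 + \<sigma>^2 > 0" by (smt (verit) zero_le_power2 power2_eq_square mult_pos_pos)
    moreover have "2*\<sigma>*(1-\<sigma>)*k \<ge> 0" using that kp k_def by auto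
    ultimately show ?thesis unfolding Q_def by linarith
  qed
  have sq: "sqrt (Q \<sigma>) > 0" if "\<sigma> \<in> {0..1}" for \<sigma> using Qpos[OF that] by simp
  have ev: "form d e (vs \<sigma>) = ((1-\<sigma>) + \<sigma> * k) / sqrt (Q \<sigma>)" for \<sigma>
    unfolding vs_def by (simp add: form_lin ee k_def)
  have evp: "form d e (vs \<sigma>) > 0" if "\<sigma> \<in> {0..1}" for \<sigma>
  proof -
    have "(1-\<sigma>) + \<sigma> * k > 0"
    proof (cases "\<sigma> = 0")
      case False then have "\<sigma> * k > 0" using that kp k_def by auto
      then show ?thesis using that by auto
    qed simp
    then show ?thesis unfolding ev using sq[OF that] by simp
  qed
  have vsvs: "form d (vs \<sigma>) (vs \<sigma>) = 1" if "\<sigma> \<in> {0..1}" for \<sigma>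
  proof -
    have "form d (\<lambda>i. (1-\<sigma>) * e i + \<sigma> * v i) (\<lambda>i. (1-\<sigma>) * e i + \<sigma> * v i) = Q \<sigma>"
      unfolding Q_def k_def by (simp add: form_lin ee vv1 form_sym[of d v e] power2_eq_square algebra_simps)
    then show ?thesis unfolding vs_def form_div1 form_div2 using Qpos[OF that]
      by (simp add: real_sqrt_mult[symmetric])
  qed
  have vson: "vec_on d (vs \<sigma>)" for \<sigma> using ve vv by (simp add: vs_def vec_on_def)
  have O: "Tm d e (vs \<sigma>) \<in> Ogroup d" if "\<sigma> \<in> {0..1}" for \<sigma>
  proof -
    interpret TT d e "vs \<sigma>" using d1 ve vson ee vsvs[OF that] evp[OF that] by unfold_locales auto
    show ?thesis by (rule T_O)
  qed
  have Q0: "Q 0 = 1" "Q 1 = 1" by (simp_all add: Q_def)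
  have vs0: "vs 0 = e" "vs 1 = v" by (simp_all add: vs_def Q0)
  have cont: "continuous_on {0..1} (\<lambda>\<sigma>. Tm d e (vs \<sigma>))"
  proof (intro continuous_on_coordinatewise_then_product)
    fix i j
    have eq: "Tm d e (vs \<sigma>) i j = (if i \<le> d \<and> j \<le> d then 1 else 0) * (mat_id d i j
      - (((1-\<sigma>) * e i + \<sigma> * v i) / sqrt (Q \<sigma>) + e i) * (sg d j * (((1-\<sigma>) * e j + \<sigma> * v j) / sqrt (Q \<sigma>) + e j))
        / (1 + ((1-\<sigma>) + \<sigma> * k) / sqrt (Q \<sigma>))
      + 2 * (((1-\<sigma>) * e i + \<sigma> * v i) / sqrt (Q \<sigma>)) * (sg d j * e j))" for \<sigma>
      unfolding Tm_def ev[symmetric] form_evec_sg[OF d1] by (simp add: vs_def)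
    have nz: "\<forall>\<sigma>\<in>{0..1}. sqrt (Q \<sigma>) \<noteq> 0" using sq by force
    have nz2: "\<forall>\<sigma>\<in>{0..1}. 1 + ((1-\<sigma>) + \<sigma> * k) / sqrt (Q \<sigma>) \<noteq> 0"
      using evp unfolding ev by force
    have cQ: "continuous_on {0..1} (\<lambda>\<sigma>. sqrt (Q \<sigma>))" unfolding Q_def by (intro continuous_intros)
    show "continuous_on {0..1} (\<lambda>\<sigma>. Tm d e (vs \<sigma>) i j)" unfolding eq
      by (intro continuous_intros cQ nz nz2)
  qed
  have "(\<lambda>\<sigma>. Tm d e (vs \<sigma>)) 1 \<in> G0 d"
    by (rule path_G0[OF cont O]) (simp_all add: vs0 Tm_self ve ee)
  then show ?thesis by (simp add: vs0)
qed



definition Rm :: "nat \<Rightarrow> real \<Rightarrow> nat \<Rightarrow> nat \<Rightarrow> real" where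
  "Rm d t = (\<lambda>i j. if i = 0 \<and> j = 0 then cos t else if i = 0 \<and> j = d then sin t
     else if i = d \<and> j = 0 then - sin t else if i = d \<and> j = d then cos t else mat_id d i j)"

lemma app_Rm: assumes d1: "d \<ge> 1"
  shows "mat_app d (Rm d t) x = (\<lambda>i. if i = 0 then cos t * x 0 + sin t * x d
     else if i = d then - sin t * x 0 + cos t * x d else if i \<le> d then x i else 0)"
proof (intro ext)
  fix i
  have d0: "d \<noteq> 0" using d1 by simp
  show "mat_app d (Rm d t) x i = (if i = 0 then cos t * x 0 + sin t * x d
     else if i = d then - sin t * x 0 + cos t * x d else if i \<le> d then x i else 0)"
  proof (cases "i = 0 \<or> i = d")
    case True
    have "(\<Sum>j\<le>d. Rm d t i j * x j) = (\<Sum>j\<le>d. (if j = 0 then Rm d t i 0 * x 0 else 0) + (if j = d then Rm d t i d * x d else 0))"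
      by (rule sum.cong) (use True d0 in \<open>auto simp: Rm_def mat_id_def\<close>)
    also have "\<dots> = Rm d t i 0 * x 0 + Rm d t i d * x d" by (simp add: sum.distrib)
    finally show ?thesis using True d0 by (auto simp: mat_app_def Rm_def)
  next
    case False
    then have "Rm d t i j = mat_id d i j" for j by (simp add: Rm_def)
    then show ?thesis using False app_I0[of i d x] by (simp add: mat_app_def)
  qed
qed

lemma Rm_O: assumes d1: "d \<ge> 1" shows "Rm d t \<in> Ogroup d"
proof -
  have d0: "d \<noteq> 0" using d1 by simp
  have "form d (mat_app d (Rm d t) x) (mat_app d (Rm d t) y) = form d x y" for x y
  proof -
    have "(\<Sum>j\<in>{1..<d}. mat_app d (Rm d t) x j * mat_app d (Rm d t) y j) = (\<Sum>j\<in>{1..<d}. x j * y j)"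
      by (rule sum.cong) (auto simp: app_Rm[OF d1])
    moreover have "(cos t * x 0 + sin t * x d) * (cos t * y 0 + sin t * y d) + (- sin t * x 0 + cos t * x d) * (- sin t * y 0 + cos t * y d)
       = ((sin t)^2 + (cos t)^2) * (x 0 * y 0 + x d * y d)"
      by algebra
    then have "(cos t * x 0 + sin t * x d) * (cos t * y 0 + sin t * y d) + (- sin t * x 0 + cos t * x d) * (- sin t * y 0 + cos t * y d)
       = x 0 * y 0 + x d * y d" by (simp only: sin_cos_squared_add mult_1_left)
    ultimately show ?thesis unfolding form_def using d0 by (simp add: app_Rm[OF d1])
  qed
  moreover have "mat_on d (Rm d t)" by (auto simp: mat_on_def Rm_def mat_id_def)
  ultimately show ?thesis unfolding Ogroup_def by auto
qed

lemma Rm_G0: assumes d1: "d \<ge> 1" shows "Rm d t \<in> G0 d"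
proof -
  have d0: "d \<noteq> 0" using d1 by simp
  have cont: "continuous_on {0..1} (\<lambda>\<sigma>. Rm d (\<sigma> * t))"
  proof (intro continuous_on_coordinatewise_then_product)
    fix i j
    define c1 where "c1 = (if (i = 0 \<and> j = 0) \<or> (i = d \<and> j = d) then 1 else (0::real))"
    define c2 where "c2 = (if i = 0 \<and> j = d then 1 else if i = d \<and> j = 0 then -1 else (0::real))"
    define c3 where "c3 = (if (i = 0 \<and> j = 0) \<or> (i = 0 \<and> j = d) \<or> (i = d \<and> j = 0) \<or> (i = d \<and> j = d) then 0 else (mat_id d i j :: real))"
    have "Rm d s i j = c1 * cos s + c2 * sin s + c3" for s
      using d0 unfolding Rm_def c1_def c2_def c3_def by auto
    then show "continuous_on {0..1} (\<lambda>\<sigma>. Rm d (\<sigma> * t) i j)" by (simp add: continuous_intros)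
  qed
  have "(\<lambda>\<sigma>. Rm d (\<sigma> * t)) 1 \<in> G0 d"
  proof (rule path_G0[OF cont])
    show "Rm d (0 * t) = mat_id d" using d0 by (auto simp: Rm_def mat_id_def fun_eq_iff)
  qed (rule Rm_O[OF d1])
  then show ?thesis by simp
qed

lemma col_mult: "j \<le> d \<Longrightarrow> (\<lambda>i. mat_mult d A B i j) = mat_app d A (\<lambda>k. B k j)"
  by (auto simp: mat_mult_def mat_app_def fun_eq_iff)

lemma app_lin: "mat_app d A (\<lambda>k. \<alpha> * x k + \<beta> * y k) = (\<lambda>i. \<alpha> * mat_app d A x i + \<beta> * mat_app d A y i)"
  by (auto simp: mat_app_def fun_eq_iff sum.distrib sum_distrib_left algebra_simps)


lemma construct:
  assumes d1: "d \<ge> 1" and vu: "vec_on d u" and vv: "vec_on d v"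
    and uu: "form d u u = 1" and vv1: "form d v v = 1" and uv: "form d u v = 0"
    and det: "v 0 * u d - u 0 * v d > 0"
  shows "\<exists>L\<in>G0 d. (\<forall>i. L i d = u i) \<and> (\<forall>i. L i 0 = v i)"
proof -
  have d0: "d \<noteq> 0" using d1 by simp
  interpret ON d u v using d1 vu vv uu vv1 uv by unfold_locales
  have z: "form d (\<lambda>i. (0::real)) u = 0" "form d (\<lambda>i. (0::real)) v = 0" by (simp_all add: form_def)
  have F: "form d (\<lambda>i. p * u i + q * v i) (\<lambda>i. p' * u i + q' * v i) = p * p' + q * q'" for p q p' q'
    using F3(3)[OF z] .
  have n0: "(u 0)^2 + (v 0)^2 > 0"
  proof (rule ccontr)
    assume "\<not> ?thesis"
    then have "u 0 = 0" "v 0 = 0" by (smt (verit) zero_le_power2 power2_eq_square mult_eq_0_iff)+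
    then show False using det by simp
  qed
  define \<rho> where "\<rho> = sqrt ((u 0)^2 + (v 0)^2)"
  have \<rho>: "\<rho> > 0" "\<rho>^2 = (u 0)^2 + (v 0)^2" using n0 by (simp_all add: \<rho>_def)
  define c where "c = v 0 / \<rho>"
  define s where "s = u 0 / \<rho>"
  have "c^2 + s^2 = ((v 0)^2 + (u 0)^2) / \<rho>^2" by (simp add: c_def s_def power_divide add_divide_distrib)
  moreover have "\<not> (u 0 = 0 \<and> v 0 = 0)" using det by auto
  ultimately have cs: "c^2 + s^2 = 1" using \<rho> n0 by (simp add: add.commute)
  obtain \<theta> where th: "c = cos \<theta>" "s = sin \<theta>" using sincos_total_2pi[of c s] cs by auto
  define p where "p = (\<lambda>i. c * u i + (- s) * v i)"
  define q where "q = (\<lambda>i. s * u i + c * v i)"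
  have pp: "form d p p = 1" unfolding p_def F using cs by (simp add: power2_eq_square)
  have qq: "form d q q = 1" unfolding q_def F using cs by (simp add: power2_eq_square)
  have qp: "form d q p = 0" unfolding p_def q_def F by simp
  have p0: "p 0 = 0" unfolding p_def c_def s_def by simp
  have pd: "p d > 0"
  proof -
    have "p d = (v 0 * u d - u 0 * v d) / \<rho>" unfolding p_def c_def s_def using \<rho>(1) by (simp add: field_simps)
    then show ?thesis using det \<rho> by simp
  qed
  have q0: "q 0 > 0"
  proof -
    have "q 0 = ((u 0)^2 + (v 0)^2) / \<rho>" unfolding q_def c_def s_def using \<rho>(1) by (simp add: field_simps power2_eq_square)
    then show ?thesis using n0 \<rho> by simp
  qed
  have vp: "vec_on d p" "vec_on d q" using vu vv by (auto simp: p_def q_def vec_on_def)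
  have e0: "vec_on d (evec 0)" "vec_on d (evec d)" by (auto simp: vec_on_def evec_def)
  have fe: "form d (evec d) x = x d" "form d (evec 0) x = x 0" for x :: "nat \<Rightarrow> real"
    by (subst form_sym, simp add: form_evec_sg[OF d1] sg_def)+
  have ee: "form d (evec 0) (evec 0) = (1::real)" "form d (evec d) (evec d) = (1::real)"
    using form_ee[OF d1] by auto
  have T1G: "Tm d (evec d) p \<in> G0 d" by (rule T_G0[OF d1 e0(2) vp(1) ee(2) pp]) (simp add: fe pd)
  have T2G: "Tm d (evec 0) q \<in> G0 d" by (rule T_G0[OF d1 e0(1) vp(2) ee(1) qq]) (simp add: fe q0)
  interpret T1: TT d "evec d" p using d1 e0 vp ee pp pd by unfold_locales (auto simp: fe)
  interpret T2: TT d "evec 0" q using d1 e0 vp ee qq q0 by unfold_locales (auto simp: fe)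
  have T1e0: "mat_app d (Tm d (evec d) p) (evec 0) = evec 0"
  proof (rule T1.T_fix[OF e0(1)])
    show "form d (evec d) (evec 0) = (0::real)" using form_ee(4)[OF d1] .
    show "form d p (evec 0) = 0" using fe(2)[of p] p0 form_sym by metis
  qed
  have T1ed: "mat_app d (Tm d (evec d) p) (evec d) = p" by (rule T1.T_e)
  have T2e0: "mat_app d (Tm d (evec 0) q) (evec 0) = q" by (rule T2.T_e)
  have T2p: "mat_app d (Tm d (evec 0) q) p = p"
    by (rule T2.T_fix[OF vp(1)]) (simp_all add: fe p0 qp)
  define R where "R = Rm d \<theta>"
  have RG: "R \<in> G0 d" unfolding R_def by (rule Rm_G0[OF d1])
  define L where "L = mat_mult d (Tm d (evec 0) q) (mat_mult d (Tm d (evec d) p) R)"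
  have LG: "L \<in> G0 d" unfolding L_def by (intro mult_G0 T1G T2G RG)
  have Rd: "(\<lambda>k. R k d) = (\<lambda>k. s * evec 0 k + c * evec d k)"
    using d0 by (auto simp: R_def Rm_def evec_def mat_id_def th fun_eq_iff)
  have R0: "(\<lambda>k. R k 0) = (\<lambda>k. c * evec 0 k + (- s) * evec d k)"
    using d0 by (auto simp: R_def Rm_def evec_def mat_id_def th fun_eq_iff)
  have Ld: "(\<lambda>i. L i d) = (\<lambda>i. s * q i + c * p i)"
    unfolding L_def col_mult[OF order_refl] col_mult[OF order_refl, of d "Tm d (evec d) p"] Rd app_lin
      T1e0 T1ed T2e0 T2p ..
  have L0: "(\<lambda>i. L i 0) = (\<lambda>i. c * q i + (- s) * p i)"
    unfolding L_def col_mult[OF le0] col_mult[OF le0, of d "Tm d (evec d) p"] R0 app_lin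
      T1e0 T1ed T2e0 T2p ..
  have "s * q i + c * p i = (c^2 + s^2) * u i" for i unfolding p_def q_def by (simp add: power2_eq_square algebra_simps)
  then have Lu: "L i d = u i" for i using Ld cs by (metis mult_1)
  have "c * q i + (- s) * p i = (c^2 + s^2) * v i" for i unfolding p_def q_def by (simp add: power2_eq_square algebra_simps)
  then have Lv: "L i 0 = v i" for i using L0 cs by (metis mult_1)
  show ?thesis using LG Lu Lv by blast
qed



lemma chsh_ln:
  fixes X Y :: real
  assumes XY: "X - Y = 1" and Y: "Y > 0"
  defines "T \<equiv> ln (sqrt X + sqrt Y)"
  shows "(exp T + exp (- T)) / 2 = sqrt X" "(exp T - exp (- T)) / 2 = sqrt Y" "T > 0"
proof -
  have X: "X > 1" using XY Y by simp
  have s: "sqrt X > 1" "sqrt Y > 0" using X Y by simp_all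
  have pos: "sqrt X + sqrt Y > 0" using s by linarith
  have eT: "exp T = sqrt X + sqrt Y" unfolding T_def using pos by simp
  have prod: "(sqrt X + sqrt Y) * (sqrt X - sqrt Y) = 1"
    using X Y XY by (simp add: algebra_simps)
  have inv: "sqrt X - sqrt Y = 1 / (sqrt X + sqrt Y)" using pos prod by (simp add: eq_divide_eq mult.commute)
  have emT: "exp (- T) = sqrt X - sqrt Y"
    unfolding exp_minus eT inv by (simp add: inverse_eq_divide)
  show "(exp T + exp (- T)) / 2 = sqrt X" "(exp T - exp (- T)) / 2 = sqrt Y" unfolding eT emT by simp_all
  have "sqrt X + sqrt Y > 1" using s by linarith
  then show "T > 0" unfolding T_def by simp
qed

definition Set1 :: "nat \<Rightarrow> (nat \<Rightarrow> complex) set" where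
  "Set1 d = {z. vec_on d z \<and>
            form d (\<lambda>i. Re (z i)) (\<lambda>i. Re (z i)) - form d (\<lambda>i. Im (z i)) (\<lambda>i. Im (z i)) = 1 \<and>
            form d (\<lambda>i. Re (z i)) (\<lambda>i. Im (z i)) = 0 \<and>
            form d (\<lambda>i. Im (z i)) (\<lambda>i. Im (z i)) > 0 \<and>
            Im (z 0) * Re (z d) - Re (z 0) * Im (z d) > 0}"

lemma extractZ:
  assumes z: "z \<in> Set1 d"
  and X_def: "X = form d (\<lambda>i. Re (z i)) (\<lambda>i. Re (z i))" and Y_def: "Y = form d (\<lambda>i. Im (z i)) (\<lambda>i. Im (z i))"
  and u_def: "u = (\<lambda>i. Re (z i) / sqrt X)" and v_def: "v = (\<lambda>i. Im (z i) / sqrt Y)"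
  shows "vec_on d u" "vec_on d v" "form d u u = 1" "form d v v = 1" "form d u v = 0"
    "v 0 * u d - u 0 * v d > 0" "\<And>i. z i = Complex (sqrt X * u i) (sqrt Y * v i)"
    "X - Y = 1" "Y > 0"
proof -
  have c: "vec_on d z" "X - Y = 1" "form d (\<lambda>i. Re (z i)) (\<lambda>i. Im (z i)) = 0" "Y > 0"
    "Im (z 0) * Re (z d) - Re (z 0) * Im (z d) > 0"
    using z unfolding Set1_def X_def Y_def by auto
  show "X - Y = 1" "Y > 0" using c by auto
  have X: "X > 0" using c by simp
  have sX: "sqrt X > 0" "sqrt Y > 0" using X c by simp_all
  show "vec_on d u" "vec_on d v" using c(1) by (auto simp: u_def v_def vec_on_def)
  show "form d u u = 1" unfolding u_def form_div1 form_div2 X_def[symmetric] using X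
    by (simp add: real_sqrt_mult[symmetric])
  show "form d v v = 1" unfolding v_def form_div1 form_div2 Y_def[symmetric] using c
    by (simp add: real_sqrt_mult[symmetric])
  show "form d u v = 0" unfolding u_def v_def form_div1 form_div2 c(3) by simp
  have "v 0 * u d - u 0 * v d = (Im (z 0) * Re (z d) - Re (z 0) * Im (z d)) / (sqrt X * sqrt Y)"
    unfolding u_def v_def using sX by (simp add: field_simps)
  then show "v 0 * u d - u 0 * v d > 0" using c sX by simp
  show "z i = Complex (sqrt X * u i) (sqrt Y * v i)" for i
    unfolding u_def v_def using sX by (simp add: complex_eq_iff)
qed

lemma part1a: assumes d1: "d \<ge> 1" shows "Z1plus d \<subseteq> Set1 d"
proof
  fix z assume "z \<in> Z1plus d"
  then obtain M c \<tau> where z: "z = mat_app d (mat_exp d (\<lambda>i j. \<tau> * cmat M i j)) (cvec c)"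
    and M: "M \<in> C1 d" and c: "c \<in> Xd d" and t: "Im \<tau> > 0" unfolding Z1plus_def by blast
  obtain a b where Mab: "M = wedge d a b" and hab: "vec_on d a" "vec_on d b" "form d a a = 1" "form d b b = 1"
    "form d a b = 0" "a 0 * b d - a d * b 0 > 0" using M unfolding C1_def by blast
  interpret ON d a b using d1 hab by unfold_locales auto
  show "z \<in> Set1 d" unfolding Set1_def z Mab using fwd[OF hab(6) _ _ t, of c] c unfolding Xd_def by auto
qed

lemma cos_sin_iT: "cos (\<i> * complex_of_real T) = complex_of_real ((exp T + exp (- T)) / 2)"
  "sin (\<i> * complex_of_real T) = \<i> * complex_of_real ((exp T - exp (- T)) / 2)"
  by (simp_all add: complex_eq_iff Re_cos Im_cos Re_sin Im_sin)

lemma part1b: assumes d1: "d \<ge> 1" shows "Set1 d \<subseteq> Z1plus d"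
proof
  fix z assume z: "z \<in> Set1 d"
  define X where "X = form d (\<lambda>i. Re (z i)) (\<lambda>i. Re (z i))"
  define Y where "Y = form d (\<lambda>i. Im (z i)) (\<lambda>i. Im (z i))"
  define u where "u = (\<lambda>i. Re (z i) / sqrt X)"
  define v where "v = (\<lambda>i. Im (z i) / sqrt Y)"
  note ex = extractZ[OF z X_def Y_def u_def v_def]
  define b where "b = (\<lambda>i. - v i)"
  have hub: "vec_on d u" "vec_on d b" "form d u u = 1" "form d b b = 1" "form d u b = 0" "u 0 * b d - u d * b 0 > 0"
    using ex(1-6) unfolding b_def by (auto simp: vec_on_def form_lin algebra_simps)
  interpret ON d u b using d1 hub by unfold_locales auto
  define T where "T = ln (sqrt X + sqrt Y)"
  note ch = chsh_ln[OF ex(8,9), folded T_def]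
  define \<tau> where "\<tau> = \<i> * complex_of_real T"
  have "z = mat_app d (mat_exp d (\<lambda>i j. \<tau> * cmat (wedge d u b) i j)) (cvec u)"
    unfolding exp_app[OF hub(1)] \<tau>_def cos_sin_iT ch(1,2) hub(3) ba
    by (auto simp: fun_eq_iff ex(7) complex_eq_iff b_def algebra_simps)
  moreover have "wedge d u b \<in> C1 d" unfolding C1_def using hub by blast
  moreover have "u \<in> Xd d" unfolding Xd_def using hub by auto
  moreover have "Im \<tau> > 0" using ch(3) by (simp add: \<tau>_def)
  ultimately show "z \<in> Z1plus d" unfolding Z1plus_def by blast
qed


lemma sum_evec: "i \<le> d \<Longrightarrow> j \<le> d \<Longrightarrow> (\<Sum>k\<le>d. L i k * evec j k) = (L i j :: real)"
proof -
  assume j: "j \<le> d"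
  have "(\<Sum>k\<le>d. L i k * evec j k) = (\<Sum>k\<le>d. if k = j then L i k else 0)"
    by (rule sum.cong) (auto simp: evec_def)
  then show ?thesis using j by simp
qed

lemma Zf: assumes d1: "d \<ge> 1" and m: "mat_on d L"
  shows "mat_app d (cmat L) (mat_app d (mat_exp d (\<lambda>i j. \<i> * complex_of_real t * cmat (M0d d) i j)) (evec d))
    = (\<lambda>i. Complex (((exp t + exp (- t)) / 2) * L i d) (((exp t - exp (- t)) / 2) * L i 0))"
proof -
  define ch where "ch = (exp t + exp (- t)) / 2"
  define sh where "sh = (exp t - exp (- t)) / 2"
  interpret ON d "evec 0" "evec d" using d1 form_ee[OF d1] by unfold_locales (auto simp: vec_on_def evec_def)
  have ev: "(evec d :: nat \<Rightarrow> complex) = cvec (evec d)" by (auto simp: cvec_def evec_def fun_eq_iff)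
  have inner: "mat_app d (mat_exp d (\<lambda>i j. \<i> * complex_of_real t * cmat (M0d d) i j)) (evec d)
     = (\<lambda>j. Complex (ch * evec d j) (sh * evec 0 j))"
    unfolding ev M0d_def exp_app[OF evec_on[OF order_refl]] cos_sin_iT ch_def[symmetric] sh_def[symmetric]
      aa bb ab ba form_ee(4)[OF d1]
    by (auto simp: fun_eq_iff complex_eq_iff algebra_simps)
  show ?thesis unfolding inner ch_def[symmetric] sh_def[symmetric]
  proof (intro ext)
    fix i
    show "mat_app d (cmat L) (\<lambda>j. Complex (ch * evec d j) (sh * evec 0 j)) i = Complex (ch * L i d) (sh * L i 0)"
    proof (cases "i \<le> d")
      case True
      have "Re (\<Sum>j\<le>d. cmat L i j * Complex (ch * evec d j) (sh * evec 0 j)) = ch * (\<Sum>j\<le>d. L i j * evec d j)"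
        by (simp add: Re_sum cmat_def sum_distrib_left mult_ac)
      moreover have "Im (\<Sum>j\<le>d. cmat L i j * Complex (ch * evec d j) (sh * evec 0 j)) = sh * (\<Sum>j\<le>d. L i j * evec 0 j)"
        by (simp add: Im_sum cmat_def sum_distrib_left mult_ac)
      ultimately show ?thesis using True d1 by (simp add: mat_app_def complex_eq_iff sum_evec)
    next
      case False
      then show ?thesis using m by (simp add: mat_app_def mat_on_def complex_eq_iff)
    qed
  qed
qed

lemma chsh_basic: fixes t :: real
  shows "((exp t + exp (- t)) / 2)^2 - ((exp t - exp (- t)) / 2)^2 = 1"
    "t > 0 \<Longrightarrow> (exp t - exp (- t)) / 2 > 0"
proof -
  have "exp t * exp (- t) = 1" by (simp add: exp_minus)
  then show "((exp t + exp (- t)) / 2)^2 - ((exp t - exp (- t)) / 2)^2 = 1"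
    by (simp add: power2_eq_square field_simps)
  show "t > 0 \<Longrightarrow> (exp t - exp (- t)) / 2 > 0" by simp
qed

lemma part2a: assumes d1: "d \<ge> 1" and L: "L \<in> G0 d" and t: "t > 0"
  shows "mat_app d (cmat L) (mat_app d (mat_exp d (\<lambda>i j. \<i> * complex_of_real t * cmat (M0d d) i j)) (evec d)) \<in> Set1 d"
proof -
  define ch where "ch = (exp t + exp (- t)) / 2"
  define sh where "sh = (exp t - exp (- t)) / 2"
  have LO: "L \<in> Ogroup d" using L G0_sub by auto
  then have m: "mat_on d L" unfolding Ogroup_def by auto
  interpret ON d "\<lambda>i. L i 0" "\<lambda>i. L i d" by (rule cols_ON[OF LO d1])
  have cs: "ch^2 - sh^2 = 1" "sh > 0" using chsh_basic[of t] t unfolding ch_def sh_def by auto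
  have det: "L 0 0 * L d d - L 0 d * L d 0 > 0" by (rule det_G0[OF L d1])
  have "sh * ch * (L 0 0 * L d d - L 0 d * L d 0) > 0"
  proof -
    have "ch > 0" unfolding ch_def by (simp add: add_pos_pos)
    then show ?thesis using cs det by simp
  qed
  moreover have "vec_on d (\<lambda>i. Complex (ch * L i d) (sh * L i 0))"
    using m by (simp add: vec_on_def mat_on_def complex_eq_iff)
  ultimately show ?thesis unfolding Zf[OF d1 m] ch_def[symmetric] sh_def[symmetric] Set1_def
    using cs by (simp add: form_lin aa bb ba power2_eq_square algebra_simps)
qed

lemma part2b: assumes d1: "d \<ge> 1" and z: "z \<in> Set1 d"
  shows "\<exists>L t. z = mat_app d (cmat L) (mat_app d (mat_exp d (\<lambda>i j. \<i> * complex_of_real t * cmat (M0d d) i j)) (evec d))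
     \<and> L \<in> G0 d \<and> t > 0"
proof -
  define X where "X = form d (\<lambda>i. Re (z i)) (\<lambda>i. Re (z i))"
  define Y where "Y = form d (\<lambda>i. Im (z i)) (\<lambda>i. Im (z i))"
  define u where "u = (\<lambda>i. Re (z i) / sqrt X)"
  define v where "v = (\<lambda>i. Im (z i) / sqrt Y)"
  note ex = extractZ[OF z X_def Y_def u_def v_def]
  obtain L where L: "L \<in> G0 d" "\<forall>i. L i d = u i" "\<forall>i. L i 0 = v i"
    using construct[OF d1 ex(1,2,3,4,5,6)] by blast
  have m: "mat_on d L" using L(1) G0_sub unfolding Ogroup_def by auto
  define T where "T = ln (sqrt X + sqrt Y)"
  note ch = chsh_ln[OF ex(8,9), folded T_def]
  have "z = mat_app d (cmat L) (mat_app d (mat_exp d (\<lambda>i j. \<i> * complex_of_real T * cmat (M0d d) i j)) (evec d))"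
    unfolding Zf[OF d1 m] ch(1,2) using L(2,3) ex(7) by (auto simp: fun_eq_iff)
  then show ?thesis using L(1) ch(3) by blast
qed

lemma part3: assumes "z \<in> Set1 d" shows "z 0 \<noteq> 0 \<and> z d \<noteq> 0 \<and> Im (z 0 / z d) > 0"
proof -
  have S: "Im (z 0) * Re (z d) - Re (z 0) * Im (z d) > 0" using assms unfolding Set1_def by auto
  have z0: "z 0 \<noteq> 0" using S by auto
  have zd: "z d \<noteq> 0" using S by auto
  have "(Re (z d))^2 + (Im (z d))^2 > 0" using zd by (simp add: complex_eq_iff sum_power2_gt_zero_iff)
  then have "Im (z 0 / z d) > 0" unfolding Im_divide using S by simp
  then show ?thesis using z0 zd by blast
qed

lemma main:
  fixes d :: nat
  assumes "d \<ge> 2"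
  shows "(Z1plus d = {z. vec_on d z \<and>
            form d (\<lambda>i. Re (z i)) (\<lambda>i. Re (z i)) - form d (\<lambda>i. Im (z i)) (\<lambda>i. Im (z i)) = 1 \<and>
            form d (\<lambda>i. Re (z i)) (\<lambda>i. Im (z i)) = 0 \<and>
            form d (\<lambda>i. Im (z i)) (\<lambda>i. Im (z i)) > 0 \<and>
            Im (z 0) * Re (z d) - Re (z 0) * Im (z d) > 0}) \<and>
    (Z1plus d = {mat_app d (cmat \<Lambda>)
                       (mat_app d (mat_exp d (\<lambda>i j. \<i> * complex_of_real t * cmat (M0d d) i j)) (evec d))
                     | \<Lambda> t. \<Lambda> \<in> G0 d \<and> t > 0}) \<and>
    (\<forall>z\<in>Z1plus d. z 0 \<noteq> 0 \<and> z d \<noteq> 0 \<and> Im (z 0 / z d) > 0)"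
proof -
  have d1: "d \<ge> 1" using assms by simp
  have eq1: "Z1plus d = Set1 d" using part1a[OF d1] part1b[OF d1] by blast
  have eq2: "Z1plus d = {mat_app d (cmat \<Lambda>)
                       (mat_app d (mat_exp d (\<lambda>i j. \<i> * complex_of_real t * cmat (M0d d) i j)) (evec d))
                     | \<Lambda> t. \<Lambda> \<in> G0 d \<and> t > 0}"
    unfolding eq1 using part2a[OF d1] part2b[OF d1] by blast
  show ?thesis using eq1 eq2 part3 unfolding Set1_def by blast
qed


theorem lemma4:
  fixes d :: nat
  assumes "d \<ge> 2"
  shows "(Z1plus d = {z. vec_on d z \<and>
            form d (\<lambda>i. Re (z i)) (\<lambda>i. Re (z i)) - form d (\<lambda>i. Im (z i)) (\<lambda>i. Im (z i)) = 1 \<and>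
            form d (\<lambda>i. Re (z i)) (\<lambda>i. Im (z i)) = 0 \<and>
            form d (\<lambda>i. Im (z i)) (\<lambda>i. Im (z i)) > 0 \<and>
            Im (z 0) * Re (z d) - Re (z 0) * Im (z d) > 0}) \<and>
    (Z1plus d = {mat_app d (cmat \<Lambda>)
                       (mat_app d (mat_exp d (\<lambda>i j. \<i> * complex_of_real t * cmat (M0d d) i j)) (evec d))
                     | \<Lambda> t. \<Lambda> \<in> G0 d \<and> t > 0}) \<and>
    (\<forall>z\<in>Z1plus d. z 0 \<noteq> 0 \<and> z d \<noteq> 0 \<and> Im (z 0 / z d) > 0)"
    using main[OF assms] .

end
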